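(* Let $k>0$, $\theta>0$, and let $X_1,\dots,X_n$ be i.i.d. Gamma random variables with shape parameter $k$ and scale parameter $\theta$ (density $\frac{x^{k-1}}{\Gamma(k)\theta^k}e^{-x/\theta}$ for $x>0$). Let $$\Delta=\min\left\{\frac12,\ \Big(3+\frac6k\Big)^{3/4}\frac{C_{\mathrm{BE}}}{\sqrt n}\right\}.$$ Then $$\Pr\Big\{\frac1n\sum_{i=1}^nX_i\ge\rho k\theta\Big\}\le\Big(\frac12+\Delta\Big)\big[\rho\exp(1-\rho)\big]^{kn}\quad\text{for }\rho\ge1,$$ $$\Pr\Big\{\frac1n\sum_{i=1}^nX_i\le\rho k\theta\Big\}\le\Big(\frac12+\Delta\Big)\big[\rho\exp(1-\rho)\big]^{kn}\quad\text{for }0<\rho\le1.$$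
   Context: $C_{\mathrm{BE}}$ denotes the absolute constant in the Berry–Esseen inequality: for i.i.d. $Y_1,Y_2,\dots$ distributed as $Y$ with $\mathbb{E}[Y]=0$, $\mathbb{E}[Y^2]>0$, $\mathbb{E}[|Y|^3]<\infty$, the cdf $F_n$ of $\sum_{i=1}^nY_i/\sqrt{n\mathbb{E}[Y^2]}$ satisfies $|F_n(y)-\Phi(y)|\le\frac{C_{\mathrm{BE}}}{\sqrt n}\frac{\mathbb{E}[|Y|^3]}{\mathbb{E}^{3/2}[Y^2]}$ for all $y,n$, where $\Phi$ is the standard normal cdf. *)

theory Defs
  imports "HOL-Probability.Probability"
begin

definition gamma_density :: "real \<Rightarrow> real \<Rightarrow> real \<Rightarrow> real" where
  "gamma_density k \<theta> x =
     (if x > 0 then x powr (k - 1) / (Gamma k * \<theta> powr k) * exp (- x / \<theta>) else 0)"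

definition std_normal_cdf :: "real \<Rightarrow> real" where
  "std_normal_cdf y = measure (density lborel std_normal_density) {..y}"

definition berry_esseen_constant :: "real \<Rightarrow> bool" where
  "berry_esseen_constant C \<longleftrightarrow>
    (\<forall>\<mu> :: real measure.
       prob_space \<mu> \<and> sets \<mu> = sets borel \<and>
       integrable \<mu> (\<lambda>y. \<bar>y\<bar> ^ 3) \<and>
       (\<integral>y. y \<partial>\<mu>) = 0 \<and> (\<integral>y. y\<^sup>2 \<partial>\<mu>) > 0 \<longrightarrow>
       (\<forall>n::nat. n > 0 \<longrightarrow> (\<forall>y::real.
          \<bar>measure (PiM {..<n} (\<lambda>_. \<mu>))
              {\<omega> \<in> space (PiM {..<n} (\<lambda>_. \<mu>)).
                 (\<Sum>i<n. \<omega> i) / sqrt (real n * (\<integral>y. y\<^sup>2 \<partial>\<mu>)) \<le> y}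
           - std_normal_cdf y\<bar>
          \<le> C / sqrt (real n) * (\<integral>y. \<bar>y\<bar> ^ 3 \<partial>\<mu>) / (\<integral>y. y\<^sup>2 \<partial>\<mu>) powr (3/2))))"

end

theory Submission
  imports Defs
begin


lemma gamma_nn1:
  fixes a :: real assumes a: "a > 0"
  shows "(\<integral>\<^sup>+x. ennreal (if x > 0 then x powr (a-1) * exp (-x) else 0) \<partial>lborel) = ennreal (Gamma a)"
proof -
  have "((\<lambda>t. t powr (a - 1) / exp t) has_integral Gamma a) {0..}"
    using Gamma_integral_real[OF a] .
  then have "((\<lambda>t. if t \<in> {0..} then t powr (a - 1) / exp t else 0) has_integral Gamma a) UNIV"
    by (subst has_integral_restrict_UNIV)
  moreover have "(\<lambda>t. if t \<in> {0..} then t powr (a - 1) / exp t else 0) = (\<lambda>x. if x > 0 then x powr (a-1) * exp (-x) else 0)"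
    by (auto simp: fun_eq_iff exp_minus field_simps)
  ultimately have I: "((\<lambda>x. if x > 0 then x powr (a-1) * exp (-x) else 0) has_integral Gamma a) UNIV" by simp
  show ?thesis
    by (rule nn_integral_has_integral_lborel[OF _ _ I]) auto
qed



lemma gamma_nn:
  fixes a \<theta> :: real assumes a: "a > 0" and th: "\<theta> > 0"
  shows "(\<integral>\<^sup>+x. ennreal (if x > 0 then x powr (a-1) * exp (-x/\<theta>) else 0) \<partial>lborel) = ennreal (\<theta> powr a * Gamma a)"
proof -
  let ?f = "\<lambda>x. ennreal (if x > 0 then x powr (a-1) * exp (-x/\<theta>) else 0)"
  have "(\<integral>\<^sup>+x. ?f x \<partial>lborel) = \<bar>\<theta>\<bar> * (\<integral>\<^sup>+x. ?f (0 + \<theta> * x) \<partial>lborel)"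
    by (rule nn_integral_real_affine) (use th in auto)
  also have "(\<lambda>x. ?f (0 + \<theta> * x)) = (\<lambda>x. ennreal (\<theta> powr (a-1)) * ennreal (if x > 0 then x powr (a-1) * exp (-x) else 0))"
    using th by (auto simp: fun_eq_iff powr_mult zero_less_mult_iff ennreal_mult'[symmetric])
  also have "(\<integral>\<^sup>+x. ennreal (\<theta> powr (a-1)) * ennreal (if x > 0 then x powr (a-1) * exp (-x) else 0) \<partial>lborel)
     = ennreal (\<theta> powr (a-1)) * ennreal (Gamma a)"
    by (subst nn_integral_cmult) (auto simp: gamma_nn1[OF a])
  also have "\<bar>\<theta>\<bar> * (ennreal (\<theta> powr (a-1)) * ennreal (Gamma a)) = ennreal (\<theta> powr a * Gamma a)"
    using th a by (simp add: ennreal_mult'[symmetric] powr_diff Gamma_real_pos less_imp_le)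
  finally show ?thesis .
qed

lemma gamma_density_nonneg: "k > 0 \<Longrightarrow> \<theta> > 0 \<Longrightarrow> gamma_density k \<theta> x \<ge> 0"
  by (auto simp: gamma_density_def Gamma_real_pos intro!: divide_nonneg_pos mult_nonneg_nonneg)

lemma gamma_density_measurable[measurable]: "gamma_density k \<theta> \<in> borel_measurable borel"
  unfolding gamma_density_def by measurable

lemma gamma_moment_nn:
  fixes k \<theta> :: real and j :: nat assumes k: "k > 0" and th: "\<theta> > 0"
  shows "(\<integral>\<^sup>+x. ennreal (gamma_density k \<theta> x * x ^ j) \<partial>lborel) = ennreal (\<theta> ^ j * Gamma (k + j) / Gamma k)"
proof -
  have "(\<lambda>x. ennreal (gamma_density k \<theta> x * x ^ j)) = (\<lambda>x. ennreal (1 / (Gamma k * \<theta> powr k)) *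
     ennreal (if x > 0 then x powr ((k + j)-1) * exp (-x/\<theta>) else 0))"
    using k th by (auto simp: fun_eq_iff gamma_density_def ennreal_mult'[symmetric] Gamma_real_pos
        powr_add powr_diff powr_realpow field_simps)
  then have "(\<integral>\<^sup>+x. ennreal (gamma_density k \<theta> x * x ^ j) \<partial>lborel) =
      ennreal (1 / (Gamma k * \<theta> powr k)) * ennreal (\<theta> powr (k + j) * Gamma (k + j))"
    using k th by (simp add: nn_integral_cmult gamma_nn)
  also have "\<dots> = ennreal (\<theta> ^ j * Gamma (k + j) / Gamma k)"
    using k th by (simp add: ennreal_mult'[symmetric] Gamma_real_pos powr_add powr_realpow field_simps)
  finally show ?thesis .
qed



lemma Gamma_pos_plus1: "(z::real) > 0 \<Longrightarrow> Gamma (z + 1) = z * Gamma z"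
  by (rule Gamma_plus1) (auto dest: nonpos_Ints_nonpos)

lemma gamma_moment_lborel:
  fixes k \<theta> :: real and j :: nat assumes k: "k > 0" and th: "\<theta> > 0"
  shows "has_bochner_integral lborel (\<lambda>x. gamma_density k \<theta> x * x ^ j) (\<theta> ^ j * Gamma (k + j) / Gamma k)"
proof (rule has_bochner_integral_nn_integral)
  show "AE x in lborel. 0 \<le> gamma_density k \<theta> x * x ^ j"
    using k th by (auto simp: gamma_density_def intro!: AE_I2 mult_nonneg_nonneg divide_nonneg_pos)
  show "0 \<le> \<theta> ^ j * Gamma (k + j) / Gamma k"
    using k th by (auto intro!: divide_nonneg_pos mult_nonneg_nonneg)
qed (use gamma_moment_nn[OF k th] in auto)

lemma gamma_prob_space: "k > 0 \<Longrightarrow> \<theta> > 0 \<Longrightarrow> prob_space (density lborel (gamma_density k \<theta>))"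
proof (rule prob_spaceI)
  assume k: "k > 0" and th: "\<theta> > 0"
  have "(\<integral>\<^sup>+x. ennreal (gamma_density k \<theta> x) \<partial>lborel) = 1"
    using gamma_moment_nn[OF k th, of 0] Gamma_real_pos[OF k] by simp
  then show "emeasure (density lborel (gamma_density k \<theta>)) (space (density lborel (gamma_density k \<theta>))) = 1"
    by (simp add: emeasure_density)
qed

lemma gamma_moment:
  fixes k \<theta> :: real and j :: nat assumes k: "k > 0" and th: "\<theta> > 0"
  shows "has_bochner_integral (density lborel (gamma_density k \<theta>)) (\<lambda>x. x ^ j) (\<theta> ^ j * Gamma (k + j) / Gamma k)"
proof -
  have nn: "AE x in lborel. 0 \<le> gamma_density k \<theta> x" using gamma_density_nonneg[OF k th] by auto
  have hb: "has_bochner_integral lborel (\<lambda>x. gamma_density k \<theta> x * x ^ j) (\<theta> ^ j * Gamma (k + j) / Gamma k)"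
    by (rule gamma_moment_lborel[OF k th])
  have i: "integrable (density lborel (gamma_density k \<theta>)) (\<lambda>x. x ^ j)"
    using hb by (subst integrable_density) (auto simp: nn integrable.intros)
  have "integral\<^sup>L (density lborel (gamma_density k \<theta>)) (\<lambda>x. x ^ j) = \<theta> ^ j * Gamma (k + j) / Gamma k"
    using hb by (subst integral_density) (auto simp: nn has_bochner_integral_integral_eq)
  with i show ?thesis by (metis has_bochner_integral_integrable)
qed

lemma gamma_moments:
  fixes k \<theta> :: real assumes k: "k > 0" and th: "\<theta> > 0"
  defines "D \<equiv> density lborel (gamma_density k \<theta>)"
  shows "has_bochner_integral D (\<lambda>x. x ^ 0) 1"
    "has_bochner_integral D (\<lambda>x. x ^ 1) (k * \<theta>)"
    "has_bochner_integral D (\<lambda>x. x ^ 2) (k * (k+1) * \<theta>^2)"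
    "has_bochner_integral D (\<lambda>x. x ^ 3) (k * (k+1) * (k+2) * \<theta>^3)"
    "has_bochner_integral D (\<lambda>x. x ^ 4) (k * (k+1) * (k+2) * (k+3) * \<theta>^4)"
proof -
  have G1: "Gamma (k + 1) = k * Gamma k" using Gamma_pos_plus1 k by simp
  have G2: "Gamma (k + 2) = (k+1) * k * Gamma k"
    using Gamma_pos_plus1[of "k+1"] k G1 by (simp add: add.assoc)
  have G3: "Gamma (k + 3) = (k+2) * (k+1) * k * Gamma k"
    using Gamma_pos_plus1[of "k+2"] k G2 by (simp add: add.assoc)
  have G4: "Gamma (k + 4) = (k+3) * (k+2) * (k+1) * k * Gamma k"
    using Gamma_pos_plus1[of "k+3"] k G3 by (simp add: add.assoc)
  have Gk: "Gamma k \<noteq> 0" using Gamma_real_pos[OF k] by simp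
  show "has_bochner_integral D (\<lambda>x. x ^ 0) 1"
    using gamma_moment[OF k th, of 0] Gk unfolding D_def by simp
  show "has_bochner_integral D (\<lambda>x. x ^ 1) (k * \<theta>)"
  proof -
    have "\<theta> ^ 1 * Gamma (k + real 1) / Gamma k = k * \<theta>" using Gk G1 by (simp add: field_simps)
    then show ?thesis using gamma_moment[OF k th, of 1] unfolding D_def by simp
  qed
  show "has_bochner_integral D (\<lambda>x. x ^ 2) (k * (k+1) * \<theta>^2)"
  proof -
    have "\<theta> ^ 2 * Gamma (k + real 2) / Gamma k = k * (k+1) * \<theta>^2" using Gk G2 by (simp add: field_simps)
    then show ?thesis using gamma_moment[OF k th, of 2] unfolding D_def by simp
  qed
  show "has_bochner_integral D (\<lambda>x. x ^ 3) (k * (k+1) * (k+2) * \<theta>^3)"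
  proof -
    have "\<theta> ^ 3 * Gamma (k + real 3) / Gamma k = k * (k+1) * (k+2) * \<theta>^3" using Gk G3 by (simp add: field_simps)
    then show ?thesis using gamma_moment[OF k th, of 3] unfolding D_def by simp
  qed
  show "has_bochner_integral D (\<lambda>x. x ^ 4) (k * (k+1) * (k+2) * (k+3) * \<theta>^4)"
  proof -
    have "\<theta> ^ 4 * Gamma (k + real 4) / Gamma k = k * (k+1) * (k+2) * (k+3) * \<theta>^4" using Gk G4 by (simp add: field_simps)
    then show ?thesis using gamma_moment[OF k th, of 4] unfolding D_def by simp
  qed
qed

lemma gamma_central_moments:
  fixes k \<theta> :: real assumes k: "k > 0" and th: "\<theta> > 0"
  defines "D \<equiv> density lborel (gamma_density k \<theta>)"
  shows "has_bochner_integral D (\<lambda>x. x - k * \<theta>) 0"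
    "has_bochner_integral D (\<lambda>x. (x - k * \<theta>)^2) (k * \<theta>^2)"
    "has_bochner_integral D (\<lambda>x. (x - k * \<theta>)^4) ((3*k^2 + 6*k) * \<theta>^4)"
proof -
  note M = gamma_moments[OF k th, folded D_def]
  let ?m = "k * \<theta>"
  have "has_bochner_integral D (\<lambda>x. x ^ 1 - ?m * x ^ 0) (k * \<theta> - ?m * 1)"
    by (intro has_bochner_integral_diff has_bochner_integral_mult_right M)
  then show "has_bochner_integral D (\<lambda>x. x - k * \<theta>) 0" by simp
  have "has_bochner_integral D (\<lambda>x. x ^ 2 - 2 * ?m * x ^ 1 + ?m^2 * x ^ 0)
     (k * (k+1) * \<theta>^2 - 2 * ?m * (k * \<theta>) + ?m^2 * 1)"
    by (intro has_bochner_integral_diff has_bochner_integral_add has_bochner_integral_mult_right M)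
  moreover have "(\<lambda>x. x ^ 2 - 2 * ?m * x ^ 1 + ?m^2 * x ^ 0) = (\<lambda>x. (x - k * \<theta>)^2)"
    by (auto simp: fun_eq_iff power2_eq_square algebra_simps)
  moreover have "k * (k+1) * \<theta>^2 - 2 * ?m * (k * \<theta>) + ?m^2 * 1 = k * \<theta>^2"
    by (simp add: power2_eq_square algebra_simps)
  ultimately show "has_bochner_integral D (\<lambda>x. (x - k * \<theta>)^2) (k * \<theta>^2)" by simp
  have "has_bochner_integral D (\<lambda>x. x ^ 4 - 4 * ?m * x ^ 3 + 6 * ?m^2 * x^2 - 4 * ?m^3 * x ^ 1 + ?m^4 * x ^ 0)
     (k * (k+1) * (k+2) * (k+3) * \<theta>^4 - 4 * ?m * (k * (k+1) * (k+2) * \<theta>^3) + 6 * ?m^2 * (k * (k+1) * \<theta>^2)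
      - 4 * ?m^3 * (k * \<theta>) + ?m^4 * 1)"
    by (intro has_bochner_integral_diff has_bochner_integral_add has_bochner_integral_mult_right M)
  moreover have "(\<lambda>x. x ^ 4 - 4 * ?m * x ^ 3 + 6 * ?m^2 * x^2 - 4 * ?m^3 * x ^ 1 + ?m^4 * x ^ 0) = (\<lambda>x. (x - k * \<theta>)^4)"
    by (auto simp: fun_eq_iff power2_eq_square power3_eq_cube power4_eq_xxxx algebra_simps)
  moreover have "k * (k+1) * (k+2) * (k+3) * \<theta>^4 - 4 * ?m * (k * (k+1) * (k+2) * \<theta>^3) + 6 * ?m^2 * (k * (k+1) * \<theta>^2)
      - 4 * ?m^3 * (k * \<theta>) + ?m^4 * 1 = (3*k^2 + 6*k) * \<theta>^4"
    by (simp add: power2_eq_square power3_eq_cube power4_eq_xxxx algebra_simps)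
  ultimately show "has_bochner_integral D (\<lambda>x. (x - k * \<theta>)^4) ((3*k^2 + 6*k) * \<theta>^4)" by simp
qed



lemma std_normal_cdf_0: "std_normal_cdf 0 = 1/2"
proof -
  let ?N = "density lborel std_normal_density"
  have ps: "prob_space ?N" using prob_space_normal_density by simp
  have A: "emeasure ?N {..0} = (\<integral>\<^sup>+x. ennreal (std_normal_density x) * indicator {..0} x \<partial>lborel)"
    by (simp add: emeasure_density)
  also have "\<dots> = ennreal \<bar>-1::real\<bar> * (\<integral>\<^sup>+x. ennreal (std_normal_density (0 + -1 * x)) * indicator {..0} (0 + -1 * x) \<partial>lborel)"
    by (rule nn_integral_real_affine) auto
  also have "\<dots> = (\<integral>\<^sup>+x. ennreal (std_normal_density x) * indicator {0..} x \<partial>lborel)"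
    by (auto intro!: nn_integral_cong simp: std_normal_density_def indicator_def)
  also have "\<dots> = emeasure ?N {0..}"
    by (simp add: emeasure_density)
  finally have eq: "emeasure ?N {..0} = emeasure ?N {0..}" .
  have z: "emeasure ?N {0} = 0"
  proof -
    have "emeasure ?N {0} = (\<integral>\<^sup>+x. ennreal (std_normal_density x) * indicator {0} x \<partial>lborel)"
      by (simp add: emeasure_density)
    also have "\<dots> = (\<integral>\<^sup>+x. 0 \<partial>(lborel::real measure))"
      by (rule nn_integral_cong_AE, rule AE_mp[OF AE_lborel_singleton[of 0]]) (auto simp: indicator_def)
    finally show ?thesis by simp
  qed
  interpret N: prob_space ?N by (rule ps)
  have m: "measure ?N {..0} = measure ?N {0..}" using eq by (simp add: measure_def)
  have "measure ?N ({..0} \<union> {0..}) = measure ?N {..0} + measure ?N {0..} - measure ?N ({..0} \<inter> {0..})"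
    by (rule measure_Un3) (auto simp: N.fmeasurable_eq_sets)
  moreover have "{..0} \<union> {0..} = space ?N" by auto
  moreover have "{..0} \<inter> {0..} = {0::real}" by auto
  moreover have "measure ?N {0} = 0" using z by (simp add: measure_def)
  ultimately have "1 = 2 * measure ?N {..0}" using m N.prob_space by simp
  then show ?thesis unfolding std_normal_cdf_def by simp
qed



lemma abs3_bound:
  fixes z t :: real assumes t: "t > 0"
  shows "\<bar>z\<bar>^3 \<le> (t * z^2 + z^4 / t) / 2"
proof -
  have "0 \<le> (t * \<bar>z\<bar> - z^2)^2 / t" using t by simp
  also have "(t * \<bar>z\<bar> - z^2)^2 / t = t * z^2 - 2 * \<bar>z\<bar>^3 + z^4 / t"
    using t by (simp add: field_simps power2_eq_square power3_eq_cube power4_eq_xxxx)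
  finally show ?thesis by simp
qed

lemma abs3_le: "\<bar>z::real\<bar>^3 \<le> 1 + z^4"
proof (cases "\<bar>z\<bar> \<le> 1")
  case True
  then have "\<bar>z\<bar>^3 \<le> 1" by (simp add: power_le_one)
  then show ?thesis by (simp add: add_increasing2)
next
  case False
  then have "\<bar>z\<bar>^3 \<le> \<bar>z\<bar>^4" by (intro power_increasing) auto
  then show ?thesis by (simp add: power_abs[symmetric])
qed

lemma be_apply:
  fixes C k \<theta> \<sigma> :: real and n :: nat
  assumes BE: "berry_esseen_constant C" and k: "k > 0" and th: "\<theta> > 0" and n: "n > 0"
    and sg: "\<bar>\<sigma>\<bar> = 1"
  defines "D \<equiv> density lborel (gamma_density k \<theta>)"
  defines "\<mu> \<equiv> distr D borel (\<lambda>x. \<sigma> * (x - k * \<theta>))"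
  shows "C \<ge> 0 \<and> measure (PiM {..<n} (\<lambda>_. \<mu>)) {\<omega> \<in> space (PiM {..<n} (\<lambda>_. \<mu>)). (\<Sum>i<n. \<omega> i) \<le> 0}
           \<le> 1/2 + C / sqrt n * sqrt (3 + 6 / k)"
proof -
  interpret D: prob_space D unfolding D_def by (rule gamma_prob_space[OF k th])
  define m where "m = k * \<theta>"
  define v where "v = k * \<theta>^2"
  define m4 where "m4 = (3*k^2 + 6*k) * \<theta>^4"
  note CM = gamma_central_moments[OF k th, folded D_def m_def]
  have v_pos: "v > 0" using k th by (simp add: v_def)
  have m4_pos: "m4 > 0" using k th unfolding m4_def by (intro mult_pos_pos add_pos_pos) auto
  have [measurable]: "(\<lambda>x. \<sigma> * (x - k * \<theta>)) \<in> measurable D borel" unfolding D_def by simp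
  have ps: "prob_space \<mu>" unfolding \<mu>_def by (rule D.prob_space_distr) simp
  have sets: "sets \<mu> = sets borel" unfolding \<mu>_def by simp
  have sq: "(\<sigma> * a)^2 = a^2" for a using sg by (metis abs_mult mult_1 power2_abs)
  have ab: "\<bar>\<sigma> * a\<bar> = \<bar>a\<bar>" for a using sg by (simp add: abs_mult)
  have E1: "(\<integral>y. y \<partial>\<mu>) = 0"
  proof -
    have "(\<integral>y. y \<partial>\<mu>) = (\<integral>x. \<sigma> * (x - m) \<partial>D)" unfolding \<mu>_def m_def by (subst integral_distr) auto
    also have "\<dots> = \<sigma> * 0" using CM(1) by (simp add: has_bochner_integral_integral_eq)
    finally show ?thesis by simp
  qed
  have E2: "(\<integral>y. y\<^sup>2 \<partial>\<mu>) = v"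
  proof -
    have "(\<integral>y. y\<^sup>2 \<partial>\<mu>) = (\<integral>x. (\<sigma> * (x - m))\<^sup>2 \<partial>D)" unfolding \<mu>_def m_def by (subst integral_distr) auto
    also have "\<dots> = (\<integral>x. (x - m)\<^sup>2 \<partial>D)" by (simp add: sq)
    also have "\<dots> = v" using CM(2) by (simp add: has_bochner_integral_integral_eq v_def)
    finally show ?thesis .
  qed
  have i2: "integrable D (\<lambda>x. (x - m)^2)" using CM(2) by (auto simp: integrable.intros)
  have i4: "integrable D (\<lambda>x. (x - m)^4)" using CM(3) by (auto simp: integrable.intros)
  have i3D: "integrable D (\<lambda>x. \<bar>x - m\<bar>^3)"
  proof (rule Bochner_Integration.integrable_bound[of _ "\<lambda>x. 1 + (x - m)^4"])
    show "integrable D (\<lambda>x. 1 + (x - m)^4)" using i4 by simp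
    show "AE x in D. norm (\<bar>x - m\<bar>^3) \<le> norm (1 + (x - m)^4)"
      using abs3_le[of "_ - m"] by (auto intro!: AE_I2 simp: add_nonneg_nonneg)
  qed (simp add: D_def)
  have I3: "integrable \<mu> (\<lambda>y. \<bar>y\<bar>^3)"
    unfolding \<mu>_def using i3D by (subst integrable_distr_eq) (auto simp: ab m_def)
  have E3eq: "(\<integral>y. \<bar>y\<bar>^3 \<partial>\<mu>) = (\<integral>x. \<bar>x - m\<bar>^3 \<partial>D)"
    unfolding \<mu>_def m_def by (subst integral_distr) (auto simp: ab)
  define s where "s = sqrt (m4 * v)"
  define t where "t = s / v"
  have s_pos: "s > 0" using m4_pos v_pos by (simp add: s_def)
  have t_pos: "t > 0" using s_pos v_pos by (simp add: t_def)
  have ss: "s * s = m4 * v" unfolding s_def using m4_pos v_pos by simp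
  have E3le: "(\<integral>y. \<bar>y\<bar>^3 \<partial>\<mu>) \<le> s"
  proof -
    have "(\<integral>x. \<bar>x - m\<bar>^3 \<partial>D) \<le> (\<integral>x. (t * (x - m)^2 + (x - m)^4 / t) / 2 \<partial>D)"
      by (rule integral_mono) (use i3D i2 i4 abs3_bound[OF t_pos] in auto)
    also have "\<dots> = (t * v + m4 / t) / 2"
      using CM(2,3) unfolding v_def m4_def
      by (simp add: integral_add integral_divide_zero integrable.intros has_bochner_integral_integral_eq i2 i4)
    also have "\<dots> = s" using v_pos s_pos ss unfolding t_def by (simp add: field_simps)
    finally show ?thesis using E3eq by simp
  qed
  have E3pos: "(\<integral>y. \<bar>y\<bar>^3 \<partial>\<mu>) > 0"
  proof (rule ccontr)
    assume "\<not> ?thesis"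
    moreover have "(\<integral>y. \<bar>y\<bar>^3 \<partial>\<mu>) \<ge> 0" by simp
    ultimately have "(\<integral>y. \<bar>y\<bar>^3 \<partial>\<mu>) = 0" by simp
    then have "AE y in \<mu>. \<bar>y\<bar>^3 = 0" using I3 by (subst (asm) integral_nonneg_eq_0_iff_AE) auto
    then have "AE y in \<mu>. y\<^sup>2 = 0" by eventually_elim simp
    then have "(\<integral>y. y\<^sup>2 \<partial>\<mu>) = (\<integral>y. 0 \<partial>\<mu>)" by (intro integral_cong_AE) (auto simp: measurable_cong_sets[OF sets refl])
    then show False using E2 v_pos by simp
  qed
  have ratio: "(\<integral>y. \<bar>y\<bar>^3 \<partial>\<mu>) / v powr (3/2) \<le> sqrt (3 + 6 / k)"
  proof -
    have vp: "v powr (3/2) = v * sqrt v"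
    proof -
      have "v powr (3/2) = v powr (1 + 1/2)" by simp
      also have "\<dots> = v * v powr (1/2)" using v_pos by (subst powr_add) simp
      finally show ?thesis using v_pos by (simp add: powr_half_sqrt)
    qed
    have "s = sqrt ((3 + 6/k) * v^2) * sqrt v"
      unfolding s_def m4_def v_def using k th
      by (simp add: real_sqrt_mult[symmetric] field_simps power2_eq_square power4_eq_xxxx)
    also have "\<dots> = sqrt (3 + 6/k) * (v * sqrt v)" using v_pos by (simp add: real_sqrt_mult)
    finally have "s = sqrt (3 + 6/k) * v powr (3/2)" using vp by simp
    then show ?thesis using E3le v_pos by (simp add: divide_le_eq)
  qed
  have "\<bar>measure (PiM {..<n} (\<lambda>_. \<mu>))
              {\<omega> \<in> space (PiM {..<n} (\<lambda>_. \<mu>)).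
                 (\<Sum>i<n. \<omega> i) / sqrt (real n * (\<integral>y. y\<^sup>2 \<partial>\<mu>)) \<le> 0}
           - std_normal_cdf 0\<bar>
          \<le> C / sqrt (real n) * (\<integral>y. \<bar>y\<bar> ^ 3 \<partial>\<mu>) / (\<integral>y. y\<^sup>2 \<partial>\<mu>) powr (3/2)"
    using BE ps sets I3 E1 E2 v_pos n unfolding berry_esseen_constant_def by blast
  moreover have "{\<omega> \<in> space (PiM {..<n} (\<lambda>_. \<mu>)). (\<Sum>i<n. \<omega> i) / sqrt (real n * (\<integral>y. y\<^sup>2 \<partial>\<mu>)) \<le> 0}
     = {\<omega> \<in> space (PiM {..<n} (\<lambda>_. \<mu>)). (\<Sum>i<n. \<omega> i) \<le> 0}"
    using E2 mult_pos_pos[OF _ v_pos, of "real n"] n by (auto simp: divide_le_0_iff)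
  ultimately have B: "\<bar>measure (PiM {..<n} (\<lambda>_. \<mu>)) {\<omega> \<in> space (PiM {..<n} (\<lambda>_. \<mu>)). (\<Sum>i<n. \<omega> i) \<le> 0} - 1/2\<bar>
      \<le> C / sqrt (real n) * ((\<integral>y. \<bar>y\<bar> ^ 3 \<partial>\<mu>) / v powr (3/2))"
    using E2 by (simp add: std_normal_cdf_0)
  have C: "C \<ge> 0"
  proof (rule ccontr)
    assume "\<not> C \<ge> 0"
    then have "C / sqrt (real n) * ((\<integral>y. \<bar>y\<bar> ^ 3 \<partial>\<mu>) / v powr (3/2)) < 0"
      using n E3pos v_pos by (intro mult_neg_pos divide_neg_pos) auto
    with B show False by linarith
  qed
  have "C / sqrt (real n) * ((\<integral>y. \<bar>y\<bar> ^ 3 \<partial>\<mu>) / v powr (3/2)) \<le> C / sqrt (real n) * sqrt (3 + 6/k)"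
    using C ratio by (intro mult_left_mono) auto
  with B C show ?thesis by linarith
qed



lemma PiM_density_eq:
  fixes N :: "'b measure" and h :: "'b \<Rightarrow> ennreal" and I :: "'i set"
  assumes I: "finite I" and pN: "prob_space N" and pD: "prob_space (density N h)"
    and h[measurable]: "h \<in> borel_measurable N"
  shows "PiM I (\<lambda>_. density N h) = density (PiM I (\<lambda>_. N)) (\<lambda>x. \<Prod>i\<in>I. h (x i))"
proof -
  interpret PD: product_sigma_finite "\<lambda>_. density N h"
    unfolding product_sigma_finite_def using prob_space_imp_sigma_finite[OF pD] by blast
  interpret PN: product_sigma_finite "\<lambda>_. N"
    unfolding product_sigma_finite_def using prob_space_imp_sigma_finite[OF pN] by blast
  show ?thesis
  proof (rule PD.PiM_eqI[symmetric, OF I])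
    show "sets (density (Pi\<^sub>M I (\<lambda>_. N)) (\<lambda>x. \<Prod>i\<in>I. h (x i))) = sets (Pi\<^sub>M I (\<lambda>_. density N h))"
      by (auto intro!: sets_PiM_cong)
    fix A assume A: "\<And>i. i \<in> I \<Longrightarrow> A i \<in> sets (density N h)"
    then have A': "\<And>i. i \<in> I \<Longrightarrow> A i \<in> sets N" by simp
    have PE: "Pi\<^sub>E I A \<in> sets (Pi\<^sub>M I (\<lambda>_. N))" using A' by (auto intro!: sets_PiM_I_finite I)
    have "emeasure (density (Pi\<^sub>M I (\<lambda>_. N)) (\<lambda>x. \<Prod>i\<in>I. h (x i))) (Pi\<^sub>E I A)
        = (\<integral>\<^sup>+x. (\<Prod>i\<in>I. h (x i)) * indicator (Pi\<^sub>E I A) x \<partial>Pi\<^sub>M I (\<lambda>_. N))"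
      using PE by (subst emeasure_density) (auto intro!: borel_measurable_prod_ennreal)
    also have "\<dots> = (\<integral>\<^sup>+x. (\<Prod>i\<in>I. h (x i) * indicator (A i) (x i)) \<partial>Pi\<^sub>M I (\<lambda>_. N))"
    proof (rule nn_integral_cong)
      fix x assume x: "x \<in> space (Pi\<^sub>M I (\<lambda>_. N))"
      then have ext: "x \<in> extensional I" by (simp add: space_PiM PiE_def)
      show "(\<Prod>i\<in>I. h (x i)) * indicator (Pi\<^sub>E I A) x = (\<Prod>i\<in>I. h (x i) * indicator (A i) (x i))"
      proof (cases "\<forall>i\<in>I. x i \<in> A i")
        case True
        then have "x \<in> Pi\<^sub>E I A" using ext by (auto simp: PiE_def)
        then show ?thesis using True by (simp add: indicator_def)
      next
        case False
        then obtain j where j: "j \<in> I" "x j \<notin> A j" by auto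
        then have "x \<notin> Pi\<^sub>E I A" by auto
        moreover have "(\<Prod>i\<in>I. h (x i) * indicator (A i) (x i)) = 0"
          using j I by (intro prod_zero bexI[of _ j]) auto
        ultimately show ?thesis by simp
      qed
    qed
    also have "\<dots> = (\<Prod>i\<in>I. \<integral>\<^sup>+y. h y * indicator (A i) y \<partial>N)"
      using A' by (subst PN.product_nn_integral_prod[OF I]) auto
    also have "\<dots> = (\<Prod>i\<in>I. emeasure (density N h) (A i))"
      using A' by (intro prod.cong refl) (simp add: emeasure_density)
    finally show "emeasure (density (Pi\<^sub>M I (\<lambda>_. N)) (\<lambda>x. \<Prod>i\<in>I. h (x i))) (Pi\<^sub>E I A)
       = (\<Prod>i\<in>I. emeasure (density N h) (A i))" .
  qed
qed

lemma change_measure: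
  fixes N :: "'b measure" and h :: "'b \<Rightarrow> ennreal" and I :: "'i set"
  assumes I: "finite I" and pN: "prob_space N" and pD: "prob_space (density N h)"
    and h[measurable]: "h \<in> borel_measurable N"
    and E: "E \<in> sets (PiM I (\<lambda>_. N))" and bd: "\<And>x. x \<in> E \<Longrightarrow> (\<Prod>i\<in>I. h (x i)) \<le> c"
  shows "emeasure (PiM I (\<lambda>_. density N h)) E \<le> c * emeasure (PiM I (\<lambda>_. N)) E"
proof -
  have "emeasure (PiM I (\<lambda>_. density N h)) E = (\<integral>\<^sup>+x. (\<Prod>i\<in>I. h (x i)) * indicator E x \<partial>PiM I (\<lambda>_. N))"
    using E by (simp add: PiM_density_eq[OF I pN pD h] emeasure_density borel_measurable_prod_ennreal)
  also have "\<dots> \<le> (\<integral>\<^sup>+x. c * indicator E x \<partial>PiM I (\<lambda>_. N))"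
    using bd by (intro nn_integral_mono) (auto simp: indicator_def)
  also have "\<dots> = c * emeasure (PiM I (\<lambda>_. N)) E"
    using E by (rule nn_integral_cmult_indicator)
  finally show ?thesis .
qed



lemma gamma_tilt:
  fixes k \<theta> \<rho> :: real assumes k: "k > 0" and th: "\<theta> > 0" and r: "\<rho> > 0"
  shows "density lborel (gamma_density k \<theta>) =
    density (density lborel (gamma_density k (\<rho> * \<theta>))) (\<lambda>x. ennreal (\<rho> powr k * exp (- ((\<rho> - 1) / (\<rho> * \<theta>)) * x)))"
proof -
  have "density (density lborel (gamma_density k (\<rho> * \<theta>))) (\<lambda>x. ennreal (\<rho> powr k * exp (- ((\<rho> - 1) / (\<rho> * \<theta>)) * x)))
     = density lborel (\<lambda>x. ennreal (gamma_density k (\<rho> * \<theta>) x) * ennreal (\<rho> powr k * exp (- ((\<rho> - 1) / (\<rho> * \<theta>)) * x)))"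
    by (rule density_density_eq) auto
  also have "\<dots> = density lborel (gamma_density k \<theta>)"
  proof (rule density_cong)
    show "AE x in lborel. ennreal (gamma_density k (\<rho> * \<theta>) x) * ennreal (\<rho> powr k * exp (- ((\<rho> - 1) / (\<rho> * \<theta>)) * x))
       = ennreal (gamma_density k \<theta> x)"
    proof (rule AE_I2)
      fix x :: real
      have e: "exp (- x / (\<rho> * \<theta>)) * exp (- ((\<rho> - 1) / (\<rho> * \<theta>)) * x) = exp (- x / \<theta>)"
        using r th by (simp add: exp_add[symmetric] field_simps)
      have "gamma_density k (\<rho> * \<theta>) x * (\<rho> powr k * exp (- ((\<rho> - 1) / (\<rho> * \<theta>)) * x)) = gamma_density k \<theta> x"
      proof (cases "x > 0")
        case True
        have "gamma_density k (\<rho> * \<theta>) x * (\<rho> powr k * exp (- ((\<rho> - 1) / (\<rho> * \<theta>)) * x))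
          = x powr (k - 1) / (Gamma k * \<theta> powr k) * (exp (- x / (\<rho> * \<theta>)) * exp (- ((\<rho> - 1) / (\<rho> * \<theta>)) * x))"
          using True r th k by (simp add: gamma_density_def powr_mult field_simps)
        also have "\<dots> = gamma_density k \<theta> x" using True by (simp only: e) (simp add: gamma_density_def)
        finally show ?thesis .
      qed (simp add: gamma_density_def)
      then show "ennreal (gamma_density k (\<rho> * \<theta>) x) * ennreal (\<rho> powr k * exp (- ((\<rho> - 1) / (\<rho> * \<theta>)) * x))
         = ennreal (gamma_density k \<theta> x)"
        using gamma_density_nonneg[OF k, of "\<rho> * \<theta>" x] r th by (simp add: ennreal_mult'[symmetric])
    qed
  qed auto
  finally show ?thesis ..
qed



lemma main_tail:
  fixes M :: "'a measure" and X :: "nat \<Rightarrow> 'a \<Rightarrow> real"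
    and k \<theta> C_BE \<rho> \<sigma> :: real and n :: nat
  assumes PM: "prob_space M"
    and BE: "berry_esseen_constant C_BE"
    and k: "k > 0" and th: "\<theta> > 0" and n1: "n \<ge> 1"
    and ind: "prob_space.indep_vars M (\<lambda>_. borel) X {..<n}"
    and dist: "\<And>i. i < n \<Longrightarrow> distributed M lborel (X i) (\<lambda>x. ennreal (gamma_density k \<theta> x))"
    and r: "\<rho> > 0" and sg: "\<bar>\<sigma>\<bar> = 1" and sr: "\<sigma> * (\<rho> - 1) \<le> 0"
  shows "measure M {\<omega> \<in> space M. \<sigma> * ((\<Sum>i<n. X i \<omega>) - real n * (\<rho> * k * \<theta>)) \<le> 0}
     \<le> (1/2 + min (1/2) ((3 + 6 / k) powr (3/4) * C_BE / sqrt (real n))) * (\<rho> * exp (1 - \<rho>)) powr (k * real n)"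
proof -
  interpret prob_space M by (rule PM)
  have n: "n > 0" using n1 by simp
  define D where "D = density lborel (gamma_density k \<theta>)"
  define D' where "D' = density lborel (gamma_density k (\<rho> * \<theta>))"
  define lam where "lam = (\<rho> - 1) / (\<rho> * \<theta>)"
  define h where "h = (\<lambda>x. ennreal (\<rho> powr k * exp (- lam * x)))"
  define c where "c = (\<rho> * exp (1 - \<rho>)) powr (k * real n)"
  define PB where "PB = PiM {..<n} (\<lambda>_. borel :: real measure)"
  define P where "P = PiM {..<n} (\<lambda>_. D)"
  define Q where "Q = PiM {..<n} (\<lambda>_. D')"
  define E where "E = {x \<in> space PB. \<sigma> * ((\<Sum>i<n. x i) - real n * (\<rho> * k * \<theta>)) \<le> 0}"
  have th': "\<rho> * \<theta> > 0" using r th by simp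
  have pD: "prob_space D" unfolding D_def by (rule gamma_prob_space[OF k th])
  have pD': "prob_space D'" unfolding D'_def by (rule gamma_prob_space[OF k th'])
  have pP: "prob_space P" unfolding P_def using pD by (intro prob_space_PiM)
  have pQ: "prob_space Q" unfolding Q_def using pD' by (intro prob_space_PiM)
  interpret Pp: prob_space P by (rule pP)
  interpret Qp: prob_space Q by (rule pQ)
  have sD[simp]: "sets D = sets borel" "sets D' = sets borel" by (simp_all add: D_def D'_def)
  have spD[simp]: "space D = UNIV" "space D' = UNIV" by (simp_all add: D_def D'_def)
  have sP: "sets P = sets PB" unfolding P_def PB_def by (intro sets_PiM_cong) auto
  have sQ: "sets Q = sets PB" unfolding Q_def PB_def by (intro sets_PiM_cong) auto
  have spP: "space P = space PB" by (rule sets_eq_imp_space_eq[OF sP])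
  have spQ: "space Q = space PB" by (rule sets_eq_imp_space_eq[OF sQ])
  have E_sets: "E \<in> sets PB" unfolding E_def PB_def by measurable
  have Xm: "i < n \<Longrightarrow> X i \<in> measurable M borel" for i
    using dist[of i] unfolding distributed_def by simp
  have dX: "i < n \<Longrightarrow> distr M borel (X i) = D" for i
  proof -
    assume i: "i < n"
    have "distr M borel (X i) = distr M lborel (X i)" by (rule distr_cong) auto
    also have "\<dots> = D" using dist[OF i] unfolding distributed_def D_def by simp
    finally show ?thesis .
  qed
  have joint: "distr M PB (\<lambda>x. \<lambda>i\<in>{..<n}. X i x) = P"
  proof -
    have "distr M PB (\<lambda>x. \<lambda>i\<in>{..<n}. X i x) = PiM {..<n} (\<lambda>i. distr M borel (X i))"
      unfolding PB_def using ind n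
      by (subst (asm) indep_vars_iff_distr_eq_PiM') (auto simp: Xm)
    also have "\<dots> = P" unfolding P_def by (intro PiM_cong) (auto simp: dX)
    finally show ?thesis .
  qed
  have Xvm: "(\<lambda>x. \<lambda>i\<in>{..<n}. X i x) \<in> measurable M PB"
    unfolding PB_def by (intro measurable_restrict) (auto simp: Xm)
  have step1: "measure M {\<omega> \<in> space M. \<sigma> * ((\<Sum>i<n. X i \<omega>) - real n * (\<rho> * k * \<theta>)) \<le> 0} = measure P E"
  proof -
    have "measure P E = measure M ((\<lambda>x. \<lambda>i\<in>{..<n}. X i x) -` E \<inter> space M)"
      using joint[symmetric] Xvm E_sets by (simp add: measure_distr)
    also have "(\<lambda>x. \<lambda>i\<in>{..<n}. X i x) -` E \<inter> space M = {\<omega> \<in> space M. \<sigma> * ((\<Sum>i<n. X i \<omega>) - real n * (\<rho> * k * \<theta>)) \<le> 0}"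
      using measurable_space[OF Xvm] unfolding E_def by auto
    finally show ?thesis by simp
  qed
  have DD: "D = density D' h"
    unfolding D_def D'_def h_def lam_def using gamma_tilt[OF k th r] by simp
  have c_nonneg: "c \<ge> 0" unfolding c_def by simp
  have bd: "(\<Prod>i\<in>{..<n}. h (x i)) \<le> ennreal c" if x: "x \<in> E" for x
  proof -
    have "(\<Prod>i\<in>{..<n}. h (x i)) = ennreal (\<Prod>i\<in>{..<n}. \<rho> powr k * exp (- lam * x i))"
      unfolding h_def by (simp add: prod_ennreal)
    also have "(\<Prod>i\<in>{..<n}. \<rho> powr k * exp (- lam * x i)) = \<rho> powr (k * real n) * exp (- lam * (\<Sum>i<n. x i))"
      using r by (simp add: prod.distrib exp_sum[symmetric] sum_distrib_left powr_realpow powr_powr[symmetric])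
    also have "\<dots> \<le> c"
    proof -
      let ?S = "\<Sum>i<n. x i"
      have xs: "\<sigma> * (?S - real n * (\<rho> * k * \<theta>)) \<le> 0" using x unfolding E_def by auto
      have "0 \<le> (\<sigma> * (\<rho> - 1)) * (\<sigma> * (?S - real n * (\<rho> * k * \<theta>)))"
        using xs sr by (intro mult_nonpos_nonpos)
      also have "\<dots> = \<sigma>^2 * ((\<rho> - 1) * (?S - real n * (\<rho> * k * \<theta>)))" by (simp add: power2_eq_square algebra_simps)
      also have "\<sigma>^2 = 1" using sg by (metis abs_power2 one_power2 power2_abs)
      finally have pos: "0 \<le> (\<rho> - 1) * (?S - real n * (\<rho> * k * \<theta>))" by simp
      have "- lam * ?S \<le> (1 - \<rho>) * (k * real n)"
      proof -
        have "lam * ?S - (\<rho> - 1) * (k * real n) = ((\<rho> - 1) * (?S - real n * (\<rho> * k * \<theta>))) / (\<rho> * \<theta>)"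
          unfolding lam_def using r th by (simp add: field_simps)
        also have "\<dots> \<ge> 0" using pos th' by simp
        finally show ?thesis by (simp add: algebra_simps)
      qed
      then have "exp (- lam * ?S) \<le> exp ((1 - \<rho>) * (k * real n))" by simp
      then have "\<rho> powr (k * real n) * exp (- lam * ?S) \<le> \<rho> powr (k * real n) * exp ((1 - \<rho>) * (k * real n))"
        by (intro mult_left_mono) auto
      also have "\<dots> = c" unfolding c_def using r by (simp add: powr_mult exp_powr_real)
      finally show ?thesis .
    qed
    finally show ?thesis by (simp add: ennreal_leI)
  qed
  have step2: "measure P E \<le> c * measure Q E"
  proof -
    have pDh: "prob_space (density D' h)" using pD DD by simp
    have "emeasure (PiM {..<n} (\<lambda>_. density D' h)) E \<le> ennreal c * emeasure (PiM {..<n} (\<lambda>_. D')) E"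
    proof (rule change_measure[OF _ pD' pDh])
      show "h \<in> borel_measurable D'" unfolding h_def D'_def by simp
      show "E \<in> sets (PiM {..<n} (\<lambda>_. D'))" using E_sets sQ unfolding Q_def by simp
    qed (use bd in auto)
    then have "emeasure P E \<le> ennreal c * emeasure Q E" unfolding P_def Q_def DD .
    then show ?thesis
      using c_nonneg Pp.emeasure_eq_measure Qp.emeasure_eq_measure
      by (simp add: ennreal_mult'[symmetric] ennreal_le_iff)
  qed
  define f where "f = (\<lambda>x::real. \<sigma> * (x - k * (\<rho> * \<theta>)))"
  define \<mu> where "\<mu> = distr D' borel f"
  have sg': "\<bar>- \<sigma>\<bar> = 1" using sg by simp
  have BEa: "C_BE \<ge> 0 \<and> measure (PiM {..<n} (\<lambda>_. \<mu>)) {\<omega> \<in> space (PiM {..<n} (\<lambda>_. \<mu>)). (\<Sum>i<n. \<omega> i) \<le> 0}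
           \<le> 1/2 + C_BE / sqrt n * sqrt (3 + 6 / k)"
    using be_apply[OF BE k th' n sg] unfolding \<mu>_def f_def D'_def by simp
  have C0: "C_BE \<ge> 0" using BEa by simp
  have fm: "f \<in> measurable D' \<mu>"
    unfolding \<mu>_def by (simp add: measurable_cong_sets[OF sD(2) refl] f_def)
  have pmu: "prob_space \<mu>" unfolding \<mu>_def using pD' by (intro prob_space.prob_space_distr) (auto simp: f_def measurable_cong_sets[OF sD(2) refl])
  have smu: "sets \<mu> = sets borel" unfolding \<mu>_def by simp
  have distr_mu: "distr D' \<mu> f = \<mu>"
    unfolding \<mu>_def by (rule distr_cong) auto
  have prodmu: "distr Q (PiM {..<n} (\<lambda>_. \<mu>)) (compose {..<n} f) = PiM {..<n} (\<lambda>_. \<mu>)"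
    unfolding Q_def using distr_PiM_finite_prob_space'[of "{..<n}" "\<lambda>_. D'" "\<lambda>_. \<mu>" f] pD' pmu fm
    by (simp add: distr_mu)
  have cm: "compose {..<n} f \<in> measurable Q (PiM {..<n} (\<lambda>_. \<mu>))"
  proof -
    have "(\<lambda>x. f (x i)) \<in> measurable Q \<mu>" if i: "i \<in> {..<n}" for i
      by (rule measurable_compose[of "\<lambda>x. x i" Q D' f \<mu>]) (use i fm in \<open>auto simp: Q_def\<close>)
    then show ?thesis unfolding compose_def by (intro measurable_restrict) auto
  qed
  define F where "F = {\<omega> \<in> space (PiM {..<n} (\<lambda>_. \<mu>)). (\<Sum>i<n. \<omega> i) \<le> 0}"
  have sPmu: "sets (PiM {..<n} (\<lambda>_. \<mu>)) = sets PB" unfolding PB_def by (intro sets_PiM_cong) (auto simp: smu)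
  have F_sets: "F \<in> sets (PiM {..<n} (\<lambda>_. \<mu>))"
  proof -
    have "F = {\<omega> \<in> space PB. (\<Sum>i<n. \<omega> i) \<le> 0}" unfolding F_def using sets_eq_imp_space_eq[OF sPmu] by simp
    moreover have "{\<omega> \<in> space PB. (\<Sum>i<n. \<omega> i) \<le> (0::real)} \<in> sets PB" unfolding PB_def by measurable
    ultimately show ?thesis using sPmu by simp
  qed
  have QE: "measure Q E = measure (PiM {..<n} (\<lambda>_. \<mu>)) F"
  proof -
    have "measure (PiM {..<n} (\<lambda>_. \<mu>)) F = measure Q (compose {..<n} f -` F \<inter> space Q)"
      using measure_distr[OF cm F_sets] prodmu by simp
    also have "compose {..<n} f -` F \<inter> space Q = E"
    proof -
      have "x \<in> compose {..<n} f -` F \<longleftrightarrow> x \<in> E" if x: "x \<in> space Q" for x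
      proof -
        have cx: "compose {..<n} f x \<in> space (PiM {..<n} (\<lambda>_. \<mu>))" using measurable_space[OF cm x] .
        have "(\<Sum>i<n. compose {..<n} f x i) = (\<Sum>i<n. \<sigma> * (x i - k * (\<rho> * \<theta>)))"
          by (simp add: compose_def f_def)
        also have "\<dots> = \<sigma> * ((\<Sum>i<n. x i) - real n * (\<rho> * k * \<theta>))"
          by (simp add: sum_distrib_left[symmetric] sum_subtractf algebra_simps)
        finally show ?thesis using cx x spQ unfolding F_def E_def by auto
      qed
      then show ?thesis using spQ unfolding E_def by auto
    qed
    finally show ?thesis by simp
  qed
  have Q1: "measure Q E \<le> 1" by (rule Qp.prob_le_1)
  have QB: "measure Q E \<le> 1/2 + C_BE / sqrt n * sqrt (3 + 6 / k)" using QE BEa unfolding F_def by simp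
  have sq: "sqrt (3 + 6 / k) \<le> (3 + 6 / k) powr (3/4)"
  proof -
    have "sqrt (3 + 6 / k) = (3 + 6 / k) powr (1/2)" using k by (simp add: powr_half_sqrt)
    also have "\<dots> \<le> (3 + 6 / k) powr (3/4)" using k by (intro powr_mono) auto
    finally show ?thesis .
  qed
  have "C_BE / sqrt n * sqrt (3 + 6 / k) \<le> (3 + 6 / k) powr (3/4) * C_BE / sqrt (real n)"
    using mult_left_mono[OF sq, of "C_BE / sqrt n"] C0 by (simp add: field_simps)
  then have QD: "measure Q E \<le> 1/2 + min (1/2) ((3 + 6 / k) powr (3/4) * C_BE / sqrt (real n))"
    using Q1 QB by linarith
  have "measure M {\<omega> \<in> space M. \<sigma> * ((\<Sum>i<n. X i \<omega>) - real n * (\<rho> * k * \<theta>)) \<le> 0} \<le> c * measure Q E"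
    using step1 step2 by simp
  also have "\<dots> \<le> c * (1/2 + min (1/2) ((3 + 6 / k) powr (3/4) * C_BE / sqrt (real n)))"
    using QD c_nonneg by (rule mult_left_mono)
  finally show ?thesis unfolding c_def by (simp add: mult.commute)
qed


theorem corollary8:
  fixes M :: "'a measure" and X :: "nat \<Rightarrow> 'a \<Rightarrow> real"
    and k \<theta> C_BE :: real and n :: nat
  assumes "prob_space M"
    and "berry_esseen_constant C_BE"
    and "k > 0" and "\<theta> > 0" and "n \<ge> 1"
    and "prob_space.indep_vars M (\<lambda>_. borel) X {..<n}"
    and "\<And>i. i < n \<Longrightarrow> distributed M lborel (X i) (\<lambda>x. ennreal (gamma_density k \<theta> x))"
  defines "\<Delta> \<equiv> min (1/2) ((3 + 6 / k) powr (3/4) * C_BE / sqrt (real n))"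
  shows "(\<forall>\<rho>. \<rho> \<ge> 1 \<longrightarrow>
           measure M {\<omega> \<in> space M. (\<Sum>i<n. X i \<omega>) / real n \<ge> \<rho> * k * \<theta>}
             \<le> (1/2 + \<Delta>) * (\<rho> * exp (1 - \<rho>)) powr (k * real n)) \<and>
         (\<forall>\<rho>. 0 < \<rho> \<and> \<rho> \<le> 1 \<longrightarrow>
           measure M {\<omega> \<in> space M. (\<Sum>i<n. X i \<omega>) / real n \<le> \<rho> * k * \<theta>}
             \<le> (1/2 + \<Delta>) * (\<rho> * exp (1 - \<rho>)) powr (k * real n))"
proof (intro conjI allI impI)
  have n: "real n > 0" using assms(5) by simp
  fix \<rho> :: real assume r: "\<rho> \<ge> 1"
  have "{\<omega> \<in> space M. (\<Sum>i<n. X i \<omega>) / real n \<ge> \<rho> * k * \<theta>}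
      = {\<omega> \<in> space M. (-1) * ((\<Sum>i<n. X i \<omega>) - real n * (\<rho> * k * \<theta>)) \<le> 0}"
    using n by (auto simp: pos_le_divide_eq algebra_simps)
  then show "measure M {\<omega> \<in> space M. (\<Sum>i<n. X i \<omega>) / real n \<ge> \<rho> * k * \<theta>}
             \<le> (1/2 + \<Delta>) * (\<rho> * exp (1 - \<rho>)) powr (k * real n)"
    using main_tail[OF assms(1-7), of \<rho> "-1"] r unfolding \<Delta>_def by simp
next
  have n: "real n > 0" using assms(5) by simp
  fix \<rho> :: real assume r: "0 < \<rho> \<and> \<rho> \<le> 1"
  have "{\<omega> \<in> space M. (\<Sum>i<n. X i \<omega>) / real n \<le> \<rho> * k * \<theta>}
      = {\<omega> \<in> space M. 1 * ((\<Sum>i<n. X i \<omega>) - real n * (\<rho> * k * \<theta>)) \<le> 0}"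
    using n by (auto simp: pos_divide_le_eq algebra_simps)
  then show "measure M {\<omega> \<in> space M. (\<Sum>i<n. X i \<omega>) / real n \<le> \<rho> * k * \<theta>}
             \<le> (1/2 + \<Delta>) * (\<rho> * exp (1 - \<rho>)) powr (k * real n)"
    using main_tail[OF assms(1-7), of \<rho> 1] r unfolding \<Delta>_def by simp
qed

end
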